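(* An idempotent semiring $S$ satisfies the identity $x+xyx+x\approx x$ if and only if it satisfies the identity $xz+xyz+xz\approx xz$.
   Context: An idempotent semiring is an algebra $(S,+,\cdot)$ with two binary operations such that $(S,+)$ and $(S,\cdot)$ are bands (associative, with $x+x=x$ and $xx=x$), and both distributive laws $x(y+z)=xy+xz$ and $(x+y)z=xz+yz$ hold; addition is not assumed commutative. *)

theory Defs
  imports Main
begin

text \<open>An idempotent semiring: two bands (associative idempotent operations) with
both distributive laws; addition need not be commutative. The structure is the
whole type 'a with operations add and mul.\<close>

definition band :: "('a \<Rightarrow> 'a \<Rightarrow> 'a) \<Rightarrow> bool" where
  "band f \<longleftrightarrow> (\<forall>x y z. f (f x y) z = f x (f y z)) \<and> (\<forall>x. f x x = x)"

definition idempotent_semiring :: "('a \<Rightarrow> 'a \<Rightarrow> 'a) \<Rightarrow> ('a \<Rightarrow> 'a \<Rightarrow> 'a) \<Rightarrow> bool" where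
  "idempotent_semiring add mul \<longleftrightarrow>
     band add \<and> band mul \<and>
     (\<forall>x y z. mul x (add y z) = add (mul x y) (mul x z)) \<and>
     (\<forall>x y z. mul (add x y) z = add (mul x z) (mul y z))"

end

theory Submission
  imports Defs
begin

locale LL = fixes add mul :: "'a \<Rightarrow> 'a \<Rightarrow> 'a"
  assumes aa: "\<And>x y z. add (add x y) z = add x (add y z)" and ai: "\<And>x. add x x = x"
  and ma: "\<And>x y z. mul (mul x y) z = mul x (mul y z)" and mi: "\<And>x. mul x x = x"
  and dl: "\<And>x y z. mul x (add y z) = add (mul x y) (mul x z)"
  and dr: "\<And>x y z. mul (add x y) z = add (mul x z) (mul y z)"
  and h: "\<And>x y. add (add x (mul (mul x y) x)) x = x"
begin

lemma c_0_14:  "\<And>x1 x2. (add x1 (add (mul x1 (mul x2 x1)) x1)) = x1" by (metis h ma aa)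
lemma c_0_15:  "\<And>x1 x2. (add (mul x1 x2) x1) = (mul x1 (add x2 x1))" by (metis dl mi)
lemma c_0_16:  "\<And>x1 x2. (add (mul x1 x2) x2) = (mul (add x1 x2) x2)" by (metis dr mi)
lemma c_0_17:  "\<And>x1 x2. (add x1 (mul x1 x2)) = (mul x1 (add x1 x2))" by (metis dl mi)
lemma c_0_18:  "\<And>x1 x2. (add x1 (mul x2 x1)) = (mul (add x1 x2) x1)" by (metis dr mi)
lemma c_0_19:  "\<And>x1 x2. (mul x1 (mul x1 x2)) = (mul x1 x2)" by (metis ma mi)
lemma c_0_20:  "\<And>x1 x2. (mul x1 (mul (add x1 (add x2 x1)) x1)) = x1" by (metis c_0_14 c_0_15 c_0_16 c_0_17 c_0_18)
lemma c_0_21:  "\<And>x1 x2 x3. (mul x1 (add (mul x1 x2) x3)) = (mul x1 (add x2 x3))" by (metis dl c_0_19)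
lemma c_0_22:  "\<And>x1 x2 x3. (mul (add (mul x1 x2) x3) (mul x1 x2)) = (mul (add x1 x3) (mul x1 x2))" by (metis dr c_0_19 c_0_18)
lemma c_0_23:  "\<And>x1 x2 x3. (add x1 (mul x2 (mul x3 x1))) = (mul (add x1 (mul x2 x3)) x1)" by (metis c_0_18 ma)
lemma c_0_24:  "\<And>x1 x2 x3 x4. (add (mul x1 x2) (mul x3 (mul x4 x2))) = (mul (add x1 (mul x3 x4)) x2)" by (metis dr ma)
lemma c_0_25:  "\<And>x1 x2 x3. (mul x1 (add x2 (mul x1 x3))) = (mul x1 (add x2 x3))" by (metis dl c_0_19)
lemma c_0_27:  "\<And>x1 x2 x3. (add (mul x1 (mul x2 x3)) x3) = (mul (add (mul x1 x2) x3) x3)" by (metis c_0_16 ma)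
lemma c_0_28:  "\<And>x1 x2 x3. (mul x1 (mul (add x1 (add x2 x1)) (mul x1 x3))) = (mul x1 x3)" by (metis ma c_0_20)
lemma c_0_29:  "\<And>x1 x2 x3. (mul x1 (mul (add x1 x2) (mul x1 x3))) = (mul x1 (mul (add x3 (mul x2 x1)) x3))" by (metis c_0_21 c_0_18 c_0_22 c_0_23)
lemma c_0_30:  "\<And>x1 x2 x3. (mul (add x1 (mul x2 x3)) x3) = (mul (add x1 x2) x3)" by (metis c_0_24 mi dr)
lemma c_0_31:  "\<And>x1 x2 x3. (mul x1 (mul (add x2 x1) x3)) = (mul x1 (mul (add x2 x3) x3))" by (metis c_0_25 dr c_0_16)
lemma c_0_32:  "\<And>x1 x2. (add x1 (add x1 x2)) = (add x1 x2)" by (metis aa ai)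
lemma c_0_33:  "\<And>x1 x2. (mul x1 (mul (add x1 x2) x2)) = (mul x1 x2)" by (metis c_0_21 c_0_16 ai)
lemma c_0_34:  "\<And>x1 x2 x3 x4. (add (mul x1 (mul x2 x3)) (mul x4 x3)) = (mul (add (mul x1 x2) x4) x3)" by (metis dr ma)
lemma c_0_35:  "\<And>x1 x2 x3. (mul (add x1 (mul x2 x3)) (mul x2 x3)) = (mul (add x1 x2) (mul x2 x3))" by (metis dr c_0_19 c_0_16)
lemma c_0_36:  "\<And>x1 x2 x3. (mul x1 (mul (add (mul x2 x1) x3) x3)) = (mul x1 (mul (add x2 x3) (mul x1 x3)))" by (metis dl c_0_27 ma)
lemma c_0_37:  "\<And>x1 x2. (mul x1 (mul (add x2 x1) (mul x1 x2))) = (mul x1 x2)" by (metis c_0_18 c_0_19 ai c_0_15 ma)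
lemma c_0_38:  "\<And>x1 x2 x3. (mul x1 (mul (add x2 (mul (add x3 x1) x1)) x2)) = (mul x1 x2)" by (metis c_0_28 c_0_29)
lemma c_0_39:  "\<And>x1 x2 x3. (add (mul (add x1 x2) x1) x3) = (add x1 (add (mul x2 x1) x3))" by (metis aa c_0_18)
lemma c_0_40:  "\<And>x1 x2 x3 x4. (mul (add x1 (add (mul x2 x3) x4)) x3) = (mul (add x1 (add x2 x4)) x3)" by (metis dr c_0_30 aa)
lemma c_0_41:  "\<And>x1 x2 x3. (mul x1 (mul (add x2 x1) (add x2 x3))) = (mul x1 (add x2 x3))" by (metis c_0_31 c_0_32 mi)
lemma c_0_42:  "\<And>x1 x2 x3. (mul (add (mul x1 x2) x3) x2) = (mul (add x1 x3) x2)" by (metis c_0_30 dr ma mi)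
lemma c_0_43:  "\<And>x1 x2 x3. (mul (add (mul x1 (add x2 x3)) x2) x3) = (mul (add x1 x2) (mul (add x2 x3) x3))" by (metis dr c_0_33 c_0_34)
lemma c_0_44:  "\<And>x1 x2 x3. (add (mul x1 (add x2 x1)) x3) = (add (mul x1 x2) (add x1 x3))" by (metis aa c_0_15)
lemma c_0_45:  "\<And>x1 x2 x3. (add (mul x1 (add x1 x2)) x3) = (add x1 (add (mul x1 x2) x3))" by (metis aa c_0_17)
lemma c_0_46:  "\<And>x1 x2 x3. (mul x1 (mul (add x2 (mul x3 x1)) x2)) = (mul x1 (mul (add x2 x3) (mul x1 x2)))" by (metis dl c_0_23 ma)
lemma c_0_47:  "\<And>x1 x2 x3. (mul x1 (mul (add x2 x1) (mul x1 x3))) = (mul x1 (mul (add x2 x3) (mul x1 x3)))" by (metis c_0_25 c_0_16 c_0_35 c_0_27 c_0_36)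
lemma c_0_48:  "\<And>x1 x2 x3. (mul x1 (mul (add x2 (add x3 x1)) (mul x1 x2))) = (mul x1 x2)" by (metis c_0_37 c_0_38 c_0_39 ma c_0_40 aa ai)
lemma c_0_49:  "\<And>x1 x2 x3. (mul x1 (add x2 (mul (add x2 x1) x3))) = (mul x1 (add x2 x3))" by (metis c_0_41 c_0_25)
lemma c_0_50:  "\<And>x1 x2 x3. (mul (add x1 x2) (mul (add x1 x3) x3)) = (mul (add x1 x2) x3)" by (metis c_0_31 c_0_32 c_0_19)
lemma c_0_51:  "\<And>x1 x2 x3. (mul (add (mul x1 x2) x3) (mul (add x1 x3) x2)) = (mul (add x1 x3) x2)" by (metis c_0_19 c_0_42)
lemma c_0_52:  "\<And>x1 x2. (mul (add (mul x1 x2) (add x1 x2)) x1) = (mul (add x1 x2) (mul (add x2 x1) x1))" by (metis c_0_43 c_0_44)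
lemma c_0_53:  "\<And>x1 x2. (add x1 (add (mul x1 x2) (add x1 x2))) = (add x1 x2)" by (metis c_0_16 c_0_45 c_0_32 mi)
lemma c_0_54:  "\<And>x1 x2 x3. (mul x1 (mul (add x1 x2) (mul x1 x3))) = (mul x1 (mul (add x3 x2) (mul x1 x3)))" by (metis c_0_29 c_0_46)
lemma c_0_55:  "\<And>x1 x2 x3. (mul x1 (mul (add x2 (add x3 x2)) (mul x1 x2))) = (mul x1 x2)" by (metis c_0_23 c_0_47 dl ma c_0_48)
lemma c_0_56:  "\<And>x1 x2 x3. (mul x1 (add x2 (mul (add x2 x3) x3))) = (mul x1 (add x2 x3))" by (metis c_0_49 c_0_50)
lemma c_0_57:  "\<And>x1 x2. (mul (add x1 (mul (add x1 x2) x2)) (add x1 x2)) = (add x1 x2)" by (metis c_0_51 mi c_0_45 c_0_16)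
lemma c_0_58:  "\<And>x1 x2. (mul (add x1 (mul (add x1 x2) (add x2 x1))) x1) = (mul (add x1 x2) x1)" by (metis c_0_18 c_0_52 c_0_23 c_0_53)
lemma c_0_59:  "\<And>x1 x2 x3. (mul x1 (mul (add x1 (add x2 x3)) (mul x1 x3))) = (mul x1 x3)" by (metis c_0_54 c_0_55)
lemma c_0_60:  "\<And>x1 x2. (add x1 (mul (add x1 x2) x2)) = (add x1 x2)" by (metis c_0_56 c_0_57 c_0_50 c_0_30 c_0_32)
lemma c_0_61:  "\<And>x1 x2 x3. (add (mul (add x1 x2) x2) x3) = (add (mul x1 x2) (add x2 x3))" by (metis aa c_0_16)
lemma c_0_62:  "\<And>x1 x2 x3 x4. (mul x1 (mul (add (mul x1 x2) x3) x4)) = (mul x1 (mul (add x2 x3) x4))" by (metis ma c_0_21)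
lemma c_0_63:  "\<And>x1 x2 x3. (mul x1 (mul (add x1 x2) x3)) = (mul x1 (mul (add x3 x2) x3))" by (metis c_0_21 dr c_0_18)
lemma c_0_64:  "\<And>x1 x2 x3. (mul x1 (mul (add x1 (add (mul x2 x1) x3)) x3)) = (mul x1 x3)" by (metis c_0_36 c_0_58 c_0_39 aa c_0_59)
lemma c_0_65:  "\<And>x1 x2 x3. (add x1 (add (mul x1 x2) (add x2 x3))) = (add x1 (add x2 x3))" by (metis aa c_0_60 c_0_61)
lemma c_0_66:  "\<And>x1 x2 x3 x4. (add (mul x1 x2) (add (mul x1 x3) x4)) = (add (mul x1 (add x2 x3)) x4)" by (metis aa dl)
lemma c_0_67:  "\<And>x1 x2 x3. (mul x1 (mul (add x2 x3) (add (mul x1 x2) x3))) = (mul x1 (add x2 x3))" by (metis c_0_62 mi c_0_21)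
lemma c_0_68:  "\<And>x1 x2 x3 x4. (mul x1 (mul (add x2 x1) (mul (add x2 x3) x4))) = (mul x1 (mul (add x2 x3) x4))" by (metis ma c_0_41)
lemma c_0_69:  "\<And>x1 x2 x3. (mul x1 (mul (add x2 (add (mul x3 x1) x2)) x2)) = (mul x1 x2)" by (metis c_0_63 c_0_64)
lemma c_0_70:  "\<And>x1 x2. (mul x1 (mul (add x2 x1) x2)) = (mul x1 x2)" by (metis c_0_21 ai c_0_19 c_0_18)
lemma c_0_71:  "\<And>x1 x2 x3 x4. (add (mul x1 (mul x2 (add x2 x3))) (add x3 x4)) = (add (mul x1 x2) (add x3 x4))" by (metis c_0_65 ma c_0_66 c_0_17)
lemma c_0_72:  "\<And>x1 x2 x3 x4. (mul (add x1 (mul x2 (add x3 x2))) (add x3 x4)) = (mul (add x1 x2) (add x3 x4))" by (metis c_0_24 c_0_41 dr)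
lemma c_0_73:  "\<And>x1 x2. (mul (add x1 x2) (add x1 (mul x2 (add x1 x2)))) = (add x1 x2)" by (metis c_0_19 c_0_67 mi c_0_39 c_0_15)
lemma c_0_74:  "\<And>x1 x2 x3 x4. (add (mul x1 x2) (add (mul x3 x2) x4)) = (add (mul (add x1 x3) x2) x4)" by (metis aa dr)
lemma c_0_76:  "\<And>x1 x2 x3. (mul x1 (mul (add x2 (add (mul x3 (add x2 x1)) x2)) x2)) = (mul x1 x2)" by (metis c_0_68 c_0_69 c_0_70)
lemma c_0_77:  "\<And>x1 x2 x3. (add (mul x1 (mul x2 (add x2 x3))) x3) = (add (mul x1 x2) x3)" by (metis c_0_71 ai)
lemma c_0_78:  "\<And>x1 x2. (add x1 (mul x2 (add x1 x2))) = (add x1 x2)" by (metis mi c_0_72 c_0_73)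
lemma c_0_79:  "\<And>x1 x2 x3. (add (mul x1 x2) (mul x3 (add x2 x3))) = (add (mul (add x1 x3) x2) x3)" by (metis c_0_74 c_0_15)
lemma c_0_81:  "\<And>x1 x2 x3. (mul x1 (mul (add x1 (add (mul x2 (add x3 x1)) x3)) x3)) = (mul x1 x3)" by (metis c_0_63 c_0_76)
lemma c_0_82:  "\<And>x1 x2 x3. (mul (add (mul x1 x2) x3) (add x2 x3)) = (add (mul (add x1 x3) x2) x3)" by (metis c_0_77 c_0_78 c_0_34 c_0_79)
lemma c_0_83:  "\<And>x1 x2 x3. (mul x1 (add x2 (mul (add x1 x3) x3))) = (mul x1 (add x2 x3))" by (metis dl c_0_33)
lemma c_0_85:  "\<And>x1 x2 x3. (mul x1 (mul (add x1 (add x2 (add x1 x3))) x3)) = (mul x1 x3)" by (metis c_0_81 c_0_82 aa c_0_40 c_0_32)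
lemma c_0_86:  "\<And>x1 x2 x3 x4. (mul (add (mul x1 (add x2 x3)) x4) x2) = (mul (add x1 (add (mul x1 x3) x4)) x2)" by (metis c_0_42 c_0_66)
lemma c_0_87:  "\<And>x1 x2 x3. (mul x1 (mul (add x2 (add x1 x3)) x3)) = (mul x1 (mul (add x2 x3) x3))" by (metis c_0_83 dr c_0_16)
lemma c_0_89:  "\<And>x1 x2 x3. (mul x1 (mul (add x2 (add x3 x2)) x2)) = (mul x1 x2)" by (metis c_0_85 c_0_86 c_0_87 c_0_62 aa)
lemma c_0_91:  "\<And>x1 x2 x3. (mul x1 (mul (add x1 (add x2 x3)) x3)) = (mul x1 x3)" by (metis c_0_63 c_0_89)
lemma hard: "add (add (mul a c) (mul (mul a b) c)) (mul a c) = mul a c"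
proof -
  have g1: "add (add (mul a c) (mul (mul a b) c)) (mul a c) = mul a (add c (add (mul b c) c))"
    by (simp add: ma dl aa)
  have g2: "add c (add (mul b c) c) = mul (add c (add b c)) c"
    by (metis c_0_16 c_0_18 aa dr mi)
  have g3: "mul a (mul (add c (add b c)) c) = mul a (mul (add a (add b c)) c)"
    by (metis c_0_63)
  show ?thesis using g1 g2 g3 c_0_91 by metis
qed
end

theorem lemma2p4:
  fixes add mul :: "'a \<Rightarrow> 'a \<Rightarrow> 'a"
  assumes "idempotent_semiring add mul"
  shows "(\<forall>x y. add (add x (mul (mul x y) x)) x = x) \<longleftrightarrow>
         (\<forall>x y z. add (add (mul x z) (mul (mul x y) z)) (mul x z) = mul x z)"
proof -
  have ba: "band add" and bm: "band mul"
   and d1: "\<And>x y z. mul x (add y z) = add (mul x y) (mul x z)"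
   and d2: "\<And>x y z. mul (add x y) z = add (mul x z) (mul y z)"
    using assms unfolding idempotent_semiring_def by blast+
  have a1: "\<And>x y z. add (add x y) z = add x (add y z)" and a2: "\<And>x. add x x = x"
    using ba unfolding band_def by blast+
  have m1: "\<And>x y z. mul (mul x y) z = mul x (mul y z)" and m2: "\<And>x. mul x x = x"
    using bm unfolding band_def by blast+
  show ?thesis
  proof
    assume H: "\<forall>x y. add (add x (mul (mul x y) x)) x = x"
    show "\<forall>x y z. add (add (mul x z) (mul (mul x y) z)) (mul x z) = mul x z"
    proof (intro allI)
      fix x y z
      have "LL add mul" by (rule LL.intro) (use a1 a2 m1 m2 d1 d2 H in blast)+
      then show "add (add (mul x z) (mul (mul x y) z)) (mul x z) = mul x z"
        by (rule LL.hard)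
    qed
  next
    assume H: "\<forall>x y z. add (add (mul x z) (mul (mul x y) z)) (mul x z) = mul x z"
    show "\<forall>x y. add (add x (mul (mul x y) x)) x = x"
    proof (intro allI)
      fix x y
      have "add (add (mul x x) (mul (mul x y) x)) (mul x x) = mul x x" using H by blast
      then show "add (add x (mul (mul x y) x)) x = x" by (simp only: m2)
    qed
  qed
qed

end
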